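(* Let $\mathbb{D}\in\mathbb{R}^{M\times M}$ satisfy $\mathbb{D}+\mathbb{D}^T=0$, let $r\ge1$ be an integer, $\gamma\in(0,1)$, $\mathbf{Y}^0\in\mathbb{R}^M$, and let $\widetilde{\mathbf{Y}}_r$ be the output of the explicit time discretization described in the context with $\mathbf{R}=0$. Then \[ \max_{0\le t\le T}\|\widetilde{\mathbf{Y}}_r(t)\|_{\ell_2}\leq\|\mathbf{Y}^0\|_{\ell_2} \] under the CFL condition $\lambda:=\tau\|\mathbb{D}\|_{\ell_2}\le\lambda(r,\gamma)$, where $\lambda(r,\gamma)=\sqrt6$ if $r\equiv0\pmod 4$; $\lambda(1,\gamma)=\sqrt{\frac{1-\gamma^2}{2}}$ and $\lambda(r,\gamma)=\sqrt{\frac{2(1-\gamma)}{3-\gamma}}$ if $r\equiv1\pmod4$, $r\ge5$; $\lambda(2,\gamma)=\sqrt{\frac{2(4-\gamma^2)}{3}}$ and $\lambda(r,\gamma)=\sqrt{\frac{6(2-\gamma)}{4-\gamma}}$ if $r\equiv 2\pmod 4$, $r\ge6$; $\lambda(r,\gamma)=\sqrt2$ if $r\equiv3\pmod4$.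
   Context: The ODE system is $\mathbf{Y}'=\mathbb{D}\mathbf{Y}+\mathbf{R}$ on $(0,T)$, $\mathbf{Y}(0)=\mathbf{Y}^0$. Let $0=t_0<t_1<\cdots<t_N=T$, $\tau_n=t_{n+1}-t_n$, $\tau=\max_n\tau_n$; $P^m$ denotes real polynomials of degree $\le m$; $\|\cdot\|_{\ell_2}$ is the Euclidean norm and the induced matrix norm. $I_{r-1}\mathbf{R}$ denotes, on each $(t_n,t_{n+1})$, the $L^2(t_n,t_{n+1})$-orthogonal projection of $\mathbf{R}$ onto $[P^{r-1}]^M$. For $1\le m\le r$ set $\gamma_m^r=0$ if $r\equiv0,3\pmod4$ and $\gamma_m^r=\frac{(m+1)(m-1+\gamma)}{m(m+\gamma)}$ if $r\equiv1,2\pmod4$. Scheme: $\widetilde{\mathbf{Y}}_r$ is a continuous function on $[0,T]$, polynomial of degree $\le\max(2r-1,r+1)$ on each $[t_n,t_{n+1}]$, with $\widetilde{\mathbf{Y}}_r(0)=\mathbf{Y}^0$, computed interval by interval as follows, with $\mathbf{Y}^n=\widetilde{\mathbf{Y}}_r(t_n)$ on $[t_n,t_{n+1}]$: (1) $\mathbf{Y}_0\equiv\mathbf{Y}^n$ and $\widetilde{\mathbf{Y}}_0\in[P^1]^M$ with $\widetilde{\mathbf{Y}}_0'=\frac1\gamma\mathbb{D}\mathbf{Y}^n$, $\widetilde{\mathbf{Y}}_0(t_n)=\mathbf{Y}^n$; (2) for $1\le m\le r$, $\mathbf{Y}_m\in[P^{m+r-1}]^M$ with $\mathbf{Y}_m'=\mathbb{D}\mathbf{Y}_{m-1}+I_{r-1}\mathbf{R}$,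 $\mathbf{Y}_m(t_n)=\mathbf{Y}^n$; (3) for $1\le m\le r$, $\widetilde{\mathbf{Y}}_m\in[P^{\max(m+r-1,m+1)}]^M$ with $\widetilde{\mathbf{Y}}_m'=\mathbb{D}[\gamma_m^r\widetilde{\mathbf{Y}}_{m-1}+(1-\gamma_m^r)\mathbf{Y}_{m-1}]+I_{r-1}\mathbf{R}$, $\widetilde{\mathbf{Y}}_m(t_n)=\mathbf{Y}^n$; and $\widetilde{\mathbf{Y}}_r|_{[t_n,t_{n+1}]}:=\widetilde{\mathbf{Y}}_r$ from step (3) with $m=r$. *)

theory Defs
  imports "HOL-Analysis.Analysis"
begin

definition gam_coef :: "nat \<Rightarrow> real \<Rightarrow> nat \<Rightarrow> real" where
  "gam_coef r \<gamma> m =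
     (if r mod 4 = 0 \<or> r mod 4 = 3 then 0
      else (real m + 1) * (real m - 1 + \<gamma>) / (real m * (real m + \<gamma>)))"

definition cfl_bound :: "nat \<Rightarrow> real \<Rightarrow> real" where
  "cfl_bound r \<gamma> =
     (if r mod 4 = 0 then sqrt 6
      else if r mod 4 = 1 then
        (if r = 1 then sqrt ((1 - \<gamma>\<^sup>2) / 2) else sqrt (2 * (1 - \<gamma>) / (3 - \<gamma>)))
      else if r mod 4 = 2 then
        (if r = 2 then sqrt (2 * (4 - \<gamma>\<^sup>2) / 3) else sqrt (6 * (2 - \<gamma>) / (4 - \<gamma>)))
      else sqrt 2)"

end

theory Submission
  imports Defs
begin

lemma pair_nonpos:
  fixes e0 e1 a0 a1 L :: real
  assumes "e0 \<le> 0" "max e1 0 * L \<le> - e0" "a1 \<le> L * a0" "a0 \<ge> 0" "a1 \<ge> 0"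
  shows "e0 * a0 + e1 * a1 \<le> 0"
proof (cases "e1 \<ge> 0")
  case True
  then have "e1 * a1 \<le> e1 * (L * a0)" using assms by (simp add: mult_left_mono)
  also have "\<dots> = (e1 * L) * a0" by simp
  also have "\<dots> \<le> (- e0) * a0" using assms True by (intro mult_right_mono) auto
  finally show ?thesis by simp
next
  case False
  then have "e1 * a1 \<le> 0" using assms by (simp add: mult_nonpos_nonneg)
  moreover have "e0 * a0 \<le> 0" using assms by (simp add: mult_nonpos_nonneg)
  ultimately show ?thesis by simp
qed

lemma alt_sum:
  fixes e A :: "nat \<Rightarrow> real" and L :: real
  assumes L: "L \<ge> 0" and A0: "\<forall>m. A m \<ge> 0" and AL: "\<forall>m. A (Suc m) \<le> L * A m"
  shows "(\<forall>i. 2*i < M \<longrightarrow> e (p+2*i) \<le> 0 \<and> (2*i+1 < M \<longrightarrow> max (e (p+2*i+1)) 0 * L \<le> - e (p+2*i)))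
     \<Longrightarrow> (\<Sum>m\<in>{p..<p+M}. e m * A m) \<le> 0"
proof (induction M arbitrary: p rule: less_induct)
  case (less M)
  show ?case
  proof (cases "M \<ge> 2")
    case True
    have h0: "e p \<le> 0" "max (e (Suc p)) 0 * L \<le> - e p" using less.prems[rule_format, of 0] True by auto
    have split: "{p..<p+M} = {p, Suc p} \<union> {p+2..<(p+2)+(M-2)}" using True by auto
    have "(\<Sum>m\<in>{p..<p+M}. e m * A m) = e p * A p + e (Suc p) * A (Suc p) + (\<Sum>m\<in>{p+2..<(p+2)+(M-2)}. e m * A m)"
      unfolding split by (subst sum.union_disjoint) auto
    moreover have "e p * A p + e (Suc p) * A (Suc p) \<le> 0"
      by (rule pair_nonpos) (use h0 AL A0 in auto)
    moreover have "(\<Sum>m\<in>{p+2..<(p+2)+(M-2)}. e m * A m) \<le> 0"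
    proof (rule less.IH)
      show "M - 2 < M" using True by simp
      show "\<forall>i. 2 * i < M - 2 \<longrightarrow> e (p + 2 + 2 * i) \<le> 0 \<and> (2 * i + 1 < M - 2 \<longrightarrow> max (e (p + 2 + 2 * i + 1)) 0 * L \<le> - e (p + 2 + 2 * i))"
      proof (intro allI impI)
        fix i assume "2 * i < M - 2"
        then show "e (p + 2 + 2 * i) \<le> 0 \<and> (2 * i + 1 < M - 2 \<longrightarrow> max (e (p + 2 + 2 * i + 1)) 0 * L \<le> - e (p + 2 + 2 * i))"
          using less.prems[rule_format, of "Suc i"] by (auto simp: algebra_simps)
      qed
    qed
    ultimately show ?thesis by linarith
  next
    case False
    then have "M = 0 \<or> M = 1" by auto
    then show ?thesis
    proof
      assume "M = 1"
      then have "e p \<le> 0" using less.prems[rule_format, of 0] by auto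
      then show ?thesis using \<open>M = 1\<close> A0 by (simp add: mult_nonpos_nonneg)
    qed simp
  qed
qed

fun pw :: "real^'n^'n \<Rightarrow> real^'n \<Rightarrow> nat \<Rightarrow> real^'n" where
  "pw D y 0 = y" | "pw D y (Suc k) = D *v pw D y k"

lemma skew_inner:
  fixes D :: "real^'n^'n"
  assumes "D + transpose D = 0"
  shows "(D *v u) \<bullet> v = - (u \<bullet> (D *v v))"
proof -
  have tD: "transpose D = - D" using assms by (simp add: eq_neg_iff_add_eq_0 add.commute)
  have "u \<bullet> (D *v v) = (u v* D) \<bullet> v" by (simp add: dot_lmul_matrix)
  also have "u v* D = transpose D *v u" by simp
  also have "\<dots> = - (D *v u)" unfolding tD by (simp add: matrix_vector_mult_def vec_eq_iff sum_negf)
  finally show ?thesis by simp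
qed

lemma skew_self:
  fixes D :: "real^'n^'n"
  assumes "D + transpose D = 0"
  shows "u \<bullet> (D *v u) = 0"
  using skew_inner[OF assms, of u u] by (simp add: inner_commute)

lemma pw_shift:
  fixes D :: "real^'n^'n"
  assumes "D + transpose D = 0"
  shows "pw D y j \<bullet> pw D y (Suc k) = - (pw D y (Suc j) \<bullet> pw D y k)"
  using skew_inner[OF assms, of "pw D y j" "pw D y k"] by simp

lemma pw_gram:
  fixes D :: "real^'n^'n"
  assumes sk: "D + transpose D = 0"
  shows "\<forall>j. pw D y j \<bullet> pw D y (j+2*i) = (-1)^i * (pw D y (j+i) \<bullet> pw D y (j+i))
           \<and> pw D y j \<bullet> pw D y (j+2*i+1) = 0"
proof (induction i)
  case 0
  show ?case using skew_self[OF sk] by simp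
next
  case (Suc i)
  show ?case
  proof
    fix j
    have e1: "j + 2 * Suc i = Suc (j + 2*i + 1)" by simp
    have e2: "j + 2 * Suc i + 1 = Suc (Suc j + 2*i + 1)" by simp
    have "pw D y j \<bullet> pw D y (j+2*Suc i) = - (pw D y (Suc j) \<bullet> pw D y (Suc j + 2*i))"
      unfolding e1 using pw_shift[OF sk, of y j "j + 2*i + 1"] by simp
    also have "\<dots> = (-1)^(Suc i) * (pw D y (j+Suc i) \<bullet> pw D y (j+Suc i))"
      using Suc.IH[rule_format, of "Suc j"] by simp
    finally have A: "pw D y j \<bullet> pw D y (j+2*Suc i) = (-1)^(Suc i) * (pw D y (j+Suc i) \<bullet> pw D y (j+Suc i))" .
    have "pw D y j \<bullet> pw D y (j+2*Suc i+1) = - (pw D y (Suc j) \<bullet> pw D y (Suc j + 2*i + 1))"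
      unfolding e2 using pw_shift[OF sk, of y j "Suc j + 2*i + 1"] by simp
    also have "\<dots> = 0" using Suc.IH[rule_format, of "Suc j"] by simp
    finally show "pw D y j \<bullet> pw D y (j+2*Suc i) = (-1)^(Suc i) * (pw D y (j+Suc i) \<bullet> pw D y (j+Suc i))
           \<and> pw D y j \<bullet> pw D y (j+2*Suc i+1) = 0" using A by simp
  qed
qed

lemma mv_sum: "(D::real^'n^'n) *v (\<Sum>i\<in>I. f i) = (\<Sum>i\<in>I. D *v f i)"
  by (induct I rule: infinite_finite_induct) (auto simp: matrix_vector_right_distrib)

definition TT :: "real^'n^'n \<Rightarrow> real^'n \<Rightarrow> nat \<Rightarrow> real \<Rightarrow> real^'n" where
  "TT D y m x = (\<Sum>k\<le>m. (x^k / fact k) *\<^sub>R pw D y k)"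

definition EE :: "real^'n^'n \<Rightarrow> real^'n \<Rightarrow> nat \<Rightarrow> real \<Rightarrow> real \<Rightarrow> real^'n" where
  "EE D y m c x = TT D y m x + (c * x^(Suc m) / fact (Suc m)) *\<^sub>R pw D y (Suc m)"

lemma TT_0 [simp]: "TT D y m 0 = y"
  unfolding TT_def by (induct m) auto

lemma EE_0 [simp]: "EE D y m c 0 = y"
  unfolding EE_def by simp

lemma TT_Suc: "TT D y (Suc m) x = TT D y m x + (x^(Suc m) / fact (Suc m)) *\<^sub>R pw D y (Suc m)"
  unfolding TT_def by simp

lemma mono_deriv:
  "((\<lambda>s. ((s - a)^(Suc k) / fact (Suc k)) *\<^sub>R v) has_vector_derivative
     (((s - a)^k / fact k) *\<^sub>R v)) (at s within S)"
proof -
  have e: "real k * (s - a)^(k - Suc 0) * (s - a) = real k * (s - a)^k" by (cases k) auto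
  have "((s - a) ^ k + real k * (s - a) ^ (k - Suc 0) * (s - a)) / (real (Suc k) * fact k) = (s - a)^k / fact k"
    unfolding e by (simp add: field_simps del: of_nat_Suc) (simp add: algebra_simps)
  then show ?thesis
    by (auto intro!: derivative_eq_intros simp del: of_nat_Suc)
qed

lemma mono_deriv_c:
  "((\<lambda>s. (c * (s - a)^(Suc k) / fact (Suc k)) *\<^sub>R v) has_vector_derivative
     ((c * (s - a)^k / fact k) *\<^sub>R v)) (at s within S)"
  using mono_deriv[of a k "c *\<^sub>R v" s S] by (simp add: mult.commute)

lemma TT_deriv:
  "((\<lambda>s. TT D y (Suc m) (s - a)) has_vector_derivative D *v TT D y m (s - a)) (at s within S)"
proof (induction m)
  case 0
  have "((\<lambda>s. y + ((s - a)^(Suc 0) / fact (Suc 0)) *\<^sub>R (D *v y)) has_vector_derivative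
       0 + (((s - a)^0 / fact 0) *\<^sub>R (D *v y))) (at s within S)"
    by (intro derivative_intros mono_deriv)
  then show ?case by (simp add: TT_def)
next
  case (Suc m)
  have "((\<lambda>s. TT D y (Suc m) (s - a) + ((s - a)^(Suc (Suc m)) / fact (Suc (Suc m))) *\<^sub>R pw D y (Suc (Suc m))) has_vector_derivative
       D *v TT D y m (s - a) + (((s - a)^(Suc m) / fact (Suc m)) *\<^sub>R pw D y (Suc (Suc m)))) (at s within S)"
    by (intro derivative_intros mono_deriv Suc.IH)
  then show ?case
    by (simp only: TT_Suc[of D y "Suc m"] TT_Suc[of D y m]) (simp add: matrix_vector_right_distrib matrix_vector_mult_scaleR)
qed

lemma EE_deriv:
  "((\<lambda>s. EE D y (Suc m) c (s - a)) has_vector_derivative D *v EE D y m c (s - a)) (at s within S)"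
proof -
  have "((\<lambda>s. TT D y (Suc m) (s - a) + ((c * (s - a)^(Suc (Suc m)) / fact (Suc (Suc m))) *\<^sub>R pw D y (Suc (Suc m)))) has_vector_derivative
       D *v TT D y m (s - a) + ((c * (s - a)^(Suc m) / fact (Suc m)) *\<^sub>R pw D y (Suc (Suc m)))) (at s within S)"
    by (intro derivative_intros mono_deriv_c TT_deriv)
  then show ?thesis
    unfolding EE_def by (simp only: matrix_vector_right_distrib matrix_vector_mult_scaleR pw.simps)
qed

lemma EE0_deriv:
  "((\<lambda>s. EE D y 0 c (s - a)) has_vector_derivative c *\<^sub>R (D *v y)) (at s within S)"
proof -
  have "((\<lambda>s. y + (((s - a)^(Suc 0) / fact (Suc 0)) *\<^sub>R (c *\<^sub>R (D *v y)))) has_vector_derivative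
       0 + (((s - a)^0 / fact 0) *\<^sub>R (c *\<^sub>R (D *v y)))) (at s within S)"
    by (intro derivative_intros mono_deriv)
  then show ?thesis by (simp add: EE_def TT_def mult.commute)
qed

lemma ode_unique:
  fixes f g :: "real \<Rightarrow> 'a::real_normed_vector"
  assumes "\<forall>s\<in>{a..b}. (f has_vector_derivative h s) (at s within {a..b})"
    and "\<forall>s\<in>{a..b}. (g has_vector_derivative h s) (at s within {a..b})"
    and "f a = g a" and "a \<le> b"
  shows "\<forall>s\<in>{a..b}. f s = g s"
proof -
  have "\<And>s. s \<in> {a..b} \<Longrightarrow> ((\<lambda>s. f s - g s) has_derivative (\<lambda>x. 0)) (at s within {a..b})"
  proof -
    fix s assume "s \<in> {a..b}"
    then have "((\<lambda>s. f s - g s) has_vector_derivative (h s - h s)) (at s within {a..b})"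
      using assms by (intro derivative_intros) auto
    then show "((\<lambda>s. f s - g s) has_derivative (\<lambda>x. 0)) (at s within {a..b})"
      by (simp add: has_vector_derivative_def)
  qed
  then obtain c where c: "\<forall>s\<in>{a..b}. f s - g s = c"
    using has_derivative_zero_constant[of "{a..b}" "\<lambda>s. f s - g s"] by auto
  have "c = 0" using c assms(3,4) by force
  then show ?thesis using c by auto
qed

abbreviation "aa D y m \<equiv> pw D y m \<bullet> pw D y m"

lemma pw_gram_r:
  fixes D :: "real^'n^'n"
  assumes sk: "D + transpose D = 0" and k: "k \<le> r"
  shows "pw D y k \<bullet> pw D y (Suc r) = (if odd (r - k) then (-1)^((r+1-k) div 2) * aa D y ((r+1+k) div 2) else 0)"
proof (cases "odd (r - k)")
  case False
  then obtain i where i: "r - k = 2*i" by (metis evenE)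
  have "Suc r = k + 2*i + 1" using i k by simp
  then show ?thesis using pw_gram[OF sk, of y i] False by (simp del: pw.simps)
next
  case True
  then obtain i where i: "r - k = 2*i + 1" by (rule oddE)
  have s: "Suc r = k + 2*(Suc i)" using i k by simp
  have "(r+1-k) div 2 = Suc i" "(r+1+k) div 2 = k + Suc i" using i k by auto
  then show ?thesis using pw_gram[OF sk, of y "Suc i"] True s by (simp del: pw.simps)
qed

lemma sum_reindex_m:
  fixes g :: "nat \<Rightarrow> real"
  assumes "\<And>k. k \<le> r \<Longrightarrow> even (r - k) \<Longrightarrow> g k = 0"
  shows "(\<Sum>k\<le>r. g k) = (\<Sum>m\<in>{(r+2) div 2..r}. g (2*m - r - 1))"
proof -
  let ?h = "\<lambda>m. 2*m - r - 1"
  have inj: "inj_on ?h {(r+2) div 2..r}" by (auto simp: inj_on_def)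
  have img: "?h ` {(r+2) div 2..r} \<subseteq> {..r}" by auto
  have "(\<Sum>k\<le>r. g k) = (\<Sum>k\<in>?h ` {(r+2) div 2..r}. g k)"
  proof (rule sum.mono_neutral_right)
    show "finite {..r}" by simp
    show "?h ` {(r+2) div 2..r} \<subseteq> {..r}" by (rule img)
    show "\<forall>i\<in>{..r} - ?h ` {(r+2) div 2..r}. g i = 0"
    proof
      fix k assume kk: "k \<in> {..r} - ?h ` {(r+2) div 2..r}"
      show "g k = 0"
      proof (cases "even (r - k)")
        case True then show ?thesis using assms kk by auto
      next
        case False
        then obtain i where i: "r - k = 2*i+1" by (metis oddE)
        have "k = ?h (r - i)" "r - i \<in> {(r+2) div 2..r}" using i kk by auto
        then show ?thesis using kk by blast
      qed
    qed
  qed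
  also have "\<dots> = (\<Sum>m\<in>{(r+2) div 2..r}. g (2*m - r - 1))"
    by (rule sum.reindex[OF inj, unfolded comp_def])
  finally show ?thesis .
qed

definition KK :: "real^'n^'n \<Rightarrow> real^'n \<Rightarrow> nat \<Rightarrow> real \<Rightarrow> real" where
  "KK D y r x = (\<Sum>m\<in>{(r+2) div 2..r}. (-1)^(r+1-m) * aa D y m * x^(2*m-r-1) / fact (2*m-r-1))"

lemma TT_inner_K:
  fixes D :: "real^'n^'n"
  assumes sk: "D + transpose D = 0"
  shows "TT D y r x \<bullet> pw D y (Suc r) = KK D y r x"
proof -
  have "TT D y r x \<bullet> pw D y (Suc r) = (\<Sum>k\<le>r. (x^k / fact k) * (pw D y k \<bullet> pw D y (Suc r)))"
    unfolding TT_def by (simp add: inner_sum_left)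
  also have "\<dots> = (\<Sum>m\<in>{(r+2) div 2..r}. (x^(2*m-r-1) / fact (2*m-r-1)) * (pw D y (2*m-r-1) \<bullet> pw D y (Suc r)))"
  proof (rule sum_reindex_m)
    fix k assume "k \<le> r" "even (r - k)"
    then show "(x^k / fact k) * (pw D y k \<bullet> pw D y (Suc r)) = 0"
      using pw_gram_r[OF sk, of k r y] by (simp del: pw.simps)
  qed
  also have "\<dots> = KK D y r x"
    unfolding KK_def
  proof (rule sum.cong[OF refl])
    fix m assume m: "m \<in> {(r+2) div 2..r}"
    have m2: "2*m \<ge> r+1" "m \<le> r" using m by auto
    then have f: "2*m-r-1 \<le> r" "odd (r - (2*m-r-1))" "(r+1-(2*m-r-1)) div 2 = r+1-m" "(r+1+(2*m-r-1)) div 2 = m"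
      by presburger+
    have "pw D y (2*m-r-1) \<bullet> pw D y (Suc r) = (-1)^(r+1-m) * aa D y m"
      using pw_gram_r[OF sk f(1), of y] by (simp only: f if_True not_False_eq_True)
    then show "(x^(2*m-r-1) / fact (2*m-r-1)) * (pw D y (2*m-r-1) \<bullet> pw D y (Suc r)) =
       (-1)^(r+1-m) * aa D y m * x^(2*m-r-1) / fact (2*m-r-1)"
      by (simp del: pw.simps)
  qed
  finally show ?thesis .
qed

definition HH :: "real^'n^'n \<Rightarrow> real^'n \<Rightarrow> nat \<Rightarrow> real \<Rightarrow> real" where
  "HH D y r x = (\<Sum>m\<in>{(r+2) div 2..r}. ((-1)^(r+1-m) * aa D y m / (fact r * fact (2*m-r-1))) * (x^(2*m) / real (2*m)))"

lemma pow_deriv: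
  "((\<lambda>x. c * (x^(Suc n) / real (Suc n))) has_real_derivative c * x^n) (at x within S)"
proof -
  have "((\<lambda>x. c * (x^(Suc n) / real (Suc n))) has_real_derivative c * ((real (Suc n) * x^n) / real (Suc n))) (at x within S)"
    by (intro DERIV_cmult DERIV_cdivide) (use DERIV_pow[of "Suc n" x S] in simp)
  then show ?thesis by (simp del: of_nat_Suc)
qed

lemma HH_deriv:
  "((\<lambda>x. HH D y r x) has_real_derivative (x^r / fact r) * KK D y r x) (at x within S)"
proof -
  have "((\<lambda>x. HH D y r x) has_real_derivative
     (\<Sum>m\<in>{(r+2) div 2..r}. ((-1)^(r+1-m) * aa D y m / (fact r * fact (2*m-r-1))) * x^(2*m-1))) (at x within S)"
    unfolding HH_def
  proof (rule DERIV_sum)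
    fix m assume m: "m \<in> {(r+2) div 2..r}"
    then have e: "2*m = Suc (2*m-1)" by auto
    show "((\<lambda>x. ((-1)^(r+1-m) * aa D y m / (fact r * fact (2*m-r-1))) * (x^(2*m) / real (2*m))) has_real_derivative
        ((-1)^(r+1-m) * aa D y m / (fact r * fact (2*m-r-1))) * x^(2*m-1)) (at x within S)"
      by (subst (1 2) e) (rule pow_deriv)
  qed
  moreover have "(\<Sum>m\<in>{(r+2) div 2..r}. ((-1)^(r+1-m) * aa D y m / (fact r * fact (2*m-r-1))) * x^(2*m-1))
      = (x^r / fact r) * KK D y r x"
    unfolding KK_def sum_distrib_left
  proof (rule sum.cong[OF refl])
    fix m assume m: "m \<in> {(r+2) div 2..r}"
    then have e: "2*m-1 = r + (2*m-r-1)" by auto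
    show "((-1)^(r+1-m) * aa D y m / (fact r * fact (2*m-r-1))) * x^(2*m-1) =
         x^r / fact r * ((-1)^(r+1-m) * aa D y m * x^(2*m-r-1) / fact (2*m-r-1))"
      unfolding e power_add by (simp add: field_simps)
  qed
  ultimately show ?thesis by simp
qed

lemma D_TT:
  "D *v TT D y r' x = D *v TT D y (Suc r') x - (x^Suc r' / fact (Suc r')) *\<^sub>R pw D y (Suc (Suc r'))"
  by (simp add: TT_Suc matrix_vector_right_distrib matrix_vector_mult_scaleR)

lemma norm_TT:
  fixes D :: "real^'n^'n"
  assumes sk: "D + transpose D = 0" and x: "x \<ge> 0"
  shows "TT D y (Suc r') x \<bullet> TT D y (Suc r') x = y \<bullet> y - 2 * HH D y (Suc r') x"
proof -
  let ?r = "Suc r'"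
  have d1: "\<forall>s\<in>{0..x}. ((\<lambda>s. TT D y ?r s \<bullet> TT D y ?r s) has_vector_derivative
        - 2 * ((s^?r / fact ?r) * KK D y ?r s)) (at s within {0..x})"
  proof
    fix s assume "s \<in> {0..x}"
    have T: "((\<lambda>s. TT D y ?r s) has_vector_derivative D *v TT D y r' s) (at s within {0..x})"
      using TT_deriv[of D y r' 0 s "{0..x}"] by simp
    have "((\<lambda>s. TT D y ?r s \<bullet> TT D y ?r s) has_vector_derivative
        (TT D y ?r s \<bullet> (D *v TT D y r' s) + (D *v TT D y r' s) \<bullet> TT D y ?r s)) (at s within {0..x})"
      by (rule bounded_bilinear.has_vector_derivative[OF bounded_bilinear_inner T T])
    moreover have "TT D y ?r s \<bullet> (D *v TT D y r' s) + (D *v TT D y r' s) \<bullet> TT D y ?r s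
        = - 2 * ((s^?r / fact ?r) * KK D y ?r s)"
    proof -
      have "TT D y ?r s \<bullet> (D *v TT D y r' s) = - ((s^?r / fact ?r) * KK D y ?r s)"
        unfolding D_TT[of D y r' s] using skew_self[OF sk, of "TT D y ?r s"] TT_inner_K[OF sk, of y ?r s]
        by (simp add: inner_diff_right del: pw.simps TT_def)
      then show ?thesis by (simp add: inner_commute mult_ac)
    qed
    ultimately show "((\<lambda>s. TT D y ?r s \<bullet> TT D y ?r s) has_vector_derivative
        - 2 * ((s^?r / fact ?r) * KK D y ?r s)) (at s within {0..x})" by simp
  qed
  have d2: "\<forall>s\<in>{0..x}. ((\<lambda>s. y \<bullet> y - 2 * HH D y ?r s) has_vector_derivative
        - 2 * ((s^?r / fact ?r) * KK D y ?r s)) (at s within {0..x})"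
  proof
    fix s assume "s \<in> {0..x}"
    have "((\<lambda>s. y \<bullet> y - 2 * HH D y ?r s) has_real_derivative 0 - 2 * ((s^?r / fact ?r) * KK D y ?r s)) (at s within {0..x})"
      by (intro DERIV_diff DERIV_const DERIV_cmult HH_deriv)
    then show "((\<lambda>s. y \<bullet> y - 2 * HH D y ?r s) has_vector_derivative
        - 2 * ((s^?r / fact ?r) * KK D y ?r s)) (at s within {0..x})"
      by (simp add: has_real_derivative_iff_has_vector_derivative)
  qed
  have h0: "HH D y ?r 0 = 0" unfolding HH_def by (intro sum.neutral) auto
  have "\<forall>s\<in>{0..x}. TT D y ?r s \<bullet> TT D y ?r s = y \<bullet> y - 2 * HH D y ?r s"
    by (rule ode_unique[OF d1 d2]) (use x h0 in auto)
  then show ?thesis using x by auto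
qed

definition ec :: "nat \<Rightarrow> real \<Rightarrow> nat \<Rightarrow> real" where
  "ec r c m = (if m \<le> r then (-1)^(r+1-m) * (2 / (fact r * fact (2*m-r-1))) * (c / real (r+1) - 1 / real (2*m))
     else (c / fact (Suc r))^2)"

lemma norm_EE:
  fixes D :: "real^'n^'n"
  assumes sk: "D + transpose D = 0" and x: "x \<ge> 0" and r: "r \<ge> 1"
  shows "EE D y r c x \<bullet> EE D y r c x = y \<bullet> y + (\<Sum>m\<in>{(r+2) div 2..<r+2}. ec r c m * (x^(2*m) * aa D y m))"
proof -
  obtain r' where r': "r = Suc r'" using r by (cases r) auto
  define \<beta> where "\<beta> = c * x^(Suc r) / fact (Suc r)"
  have "EE D y r c x \<bullet> EE D y r c x = TT D y r x \<bullet> TT D y r x + 2 * \<beta> * (TT D y r x \<bullet> pw D y (Suc r)) + \<beta>^2 * aa D y (Suc r)"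
    unfolding EE_def \<beta>_def[symmetric] by (simp add: inner_add_left inner_add_right inner_commute power2_eq_square del: pw.simps)
  also have "\<dots> = y \<bullet> y - 2 * HH D y r x + 2 * \<beta> * KK D y r x + \<beta>^2 * aa D y (Suc r)"
    using norm_TT[OF sk x, of y r'] TT_inner_K[OF sk, of y r x] r' by simp
  finally have A0: "EE D y r c x \<bullet> EE D y r c x = y \<bullet> y - 2 * HH D y r x + 2 * \<beta> * KK D y r x + \<beta>^2 * aa D y (Suc r)" .
  have C: "- 2 * HH D y r x + 2 * \<beta> * KK D y r x = (\<Sum>m\<in>{(r+2) div 2..r}. ec r c m * (x^(2*m) * aa D y m))"
  proof -
    have h1: "- 2 * HH D y r x = (\<Sum>m\<in>{(r+2) div 2..r}. - 2 * (((-1)^(r+1-m) * aa D y m / (fact r * fact (2*m-r-1))) * (x^(2*m) / real (2*m))))"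
      unfolding HH_def by (simp add: sum_distrib_left)
    have h2: "2 * \<beta> * KK D y r x = (\<Sum>m\<in>{(r+2) div 2..r}. 2 * \<beta> * ((-1)^(r+1-m) * aa D y m * x^(2*m-r-1) / fact (2*m-r-1)))"
      unfolding KK_def by (simp add: sum_distrib_left)
    show ?thesis unfolding h1 h2 sum.distrib[symmetric]
    proof (rule sum.cong[OF refl])
      fix m assume m: "m \<in> {(r+2) div 2..r}"
      then have m2: "2*m = Suc r + (2*m-r-1)" "m \<le> r" by auto
      have fr: "fact (Suc r) = real (Suc r) * fact r" by simp
      have "x^(2*m) = x^(Suc r) * x^(2*m-r-1)" by (subst m2(1)) (simp only: power_add)
      then show "- 2 * (((-1)^(r+1-m) * aa D y m / (fact r * fact (2*m-r-1))) * (x^(2*m) / real (2*m))) +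
           2 * \<beta> * ((-1)^(r+1-m) * aa D y m * x^(2*m-r-1) / fact (2*m-r-1)) =
           ec r c m * (x^(2*m) * aa D y m)"
        unfolding ec_def \<beta>_def using m2(2) fr
        by (simp add: field_simps del: of_nat_Suc fact_Suc)
    qed
  qed
  have A: "EE D y r c x \<bullet> EE D y r c x = y \<bullet> y + (\<Sum>m\<in>{(r+2) div 2..r}. ec r c m * (x^(2*m) * aa D y m)) + \<beta>^2 * aa D y (Suc r)"
    using A0 C by linarith
  have set: "{(r+2) div 2..<r+2} = insert (Suc r) {(r+2) div 2..r}" by auto
  have "\<beta>^2 * aa D y (Suc r) = ec r c (Suc r) * (x^(2*Suc r) * aa D y (Suc r))"
    unfolding ec_def \<beta>_def by (simp add: power_mult_distrib power_mult field_simps power2_eq_square del: pw.simps)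
  then show ?thesis unfolding A set by (simp del: pw.simps)
qed

lemma ec_zero:
  assumes "m \<le> r" "2*m \<ge> r+1"
  shows "ec r 0 m = - ((-1)^(r+1-m) / (fact r * fact (2*m-r-1) * real m))"
  using assms unfolding ec_def by (simp add: field_simps)

lemma ec_gam:
  assumes "m \<le> r" "2*m \<ge> r+1" "\<gamma> > 0"
  shows "ec r ((real r + 1) / (real r + \<gamma>)) m
      = (-1)^(r+1-m) * ((real (2*m-r-1) + 1 - \<gamma>) / (fact r * fact (2*m-r-1) * (real r + \<gamma>) * real m))"
proof -
  have m: "real (2*m-r-1) = 2 * real m - real r - 1" using assms by (simp add: of_nat_diff)
  have mp: "real m > 0" using assms by auto
  have rg: "real r + \<gamma> > 0" using assms by simp
  have c: "(real r + 1) / (real r + \<gamma>) / real (r+1) = 1 / (real r + \<gamma>)"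
    using rg by (simp add: divide_divide_eq_left del: of_nat_Suc) (simp add: add.commute)
  have d: "2 / (fact r * fact (2*m-r-1)) * (1 / (real r + \<gamma>) - 1 / real (2*m))
      = (real (2*m-r-1) + 1 - \<gamma>) / (fact r * fact (2*m-r-1) * (real r + \<gamma>) * real m)"
    unfolding m using mp rg by (simp add: divide_simps)
  show ?thesis using assms unfolding ec_def c d[symmetric] by (simp del: of_nat_Suc)
qed

lemma ec_last:
  assumes "\<gamma> > 0"
  shows "ec r ((real r + 1) / (real r + \<gamma>)) (Suc r) = 1 / ((real r + \<gamma>)^2 * (fact r)^2)"
proof -
  have rg: "real r + \<gamma> > 0" using assms by simp
  have f: "fact (Suc r) = (real r + 1) * fact r" by (simp add: fact_Suc)
  have "(real r + 1) / (real r + \<gamma>) / fact (Suc r) = 1 / ((real r + \<gamma>) * fact r)"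
    unfolding f using rg by (simp add: divide_divide_eq_left del: of_nat_Suc)
  then show ?thesis unfolding ec_def by (simp add: power_mult_distrib power_divide)
qed

lemma ratio_le:
  fixes L X Y :: real
  assumes "X > 0" "Y > 0" "L * Y \<le> X"
  shows "L * (1 / X) \<le> 1 / Y"
  using assms by (simp add: divide_le_eq le_divide_eq mult.commute)

lemma R0:
  fixes L :: real
  assumes "L \<le> real (q+2) * real (q+1)" "m \<ge> 1" "L \<ge> 0"
  shows "L * (1 / (fact r * fact (q+2) * real (m+1))) \<le> 1 / (fact r * fact q * real m)"
proof (rule ratio_le)
  have fq: "fact (q+2) = real (q+2) * real (q+1) * fact q" by (simp add: fact_Suc algebra_simps del: of_nat_Suc)
  have p: "fact r > (0::real)" "fact q > (0::real)" "real m > 0" using assms by auto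
  have "L * real m \<le> real (q+2) * real (q+1) * real (m+1)"
    using assms by (intro mult_mono) auto
  then have "(fact r * fact q) * (L * real m) \<le> (fact r * fact q) * (real (q+2) * real (q+1) * real (m+1))"
    using p by (intro mult_left_mono) auto
  then show "L * (fact r * fact q * real m) \<le> fact r * fact (q+2) * real (m+1)"
    unfolding fq by (simp add: ac_simps)
  show "fact r * fact (q+2) * real (m+1) > 0" "fact r * fact q * real m > 0" using p by auto
qed

lemma RG:
  fixes L \<gamma> :: real
  assumes "L * (real q + 3 - \<gamma>) \<le> real (q+2) * real (q+1) * (real q + 1 - \<gamma>)" "m \<ge> 1" "L \<ge> 0"
    "0 < \<gamma>" "\<gamma> < 1"
  shows "L * ((real (q+2) + 1 - \<gamma>) / (fact r * fact (q+2) * (real r + \<gamma>) * real (m+1)))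
     \<le> (real q + 1 - \<gamma>) / (fact r * fact q * (real r + \<gamma>) * real m)"
proof -
  have fq: "fact (q+2) = real (q+2) * real (q+1) * fact q" by (simp add: fact_Suc algebra_simps del: of_nat_Suc)
  have p: "fact r > (0::real)" "fact q > (0::real)" "real m > 0" "real r + \<gamma> > 0" "real q + 1 - \<gamma> > 0" using assms by auto
  define X where "X = fact r * fact (q+2) * (real r + \<gamma>) * real (m+1) / (real q + 3 - \<gamma>)"
  define Y where "Y = fact r * fact q * (real r + \<gamma>) * real m / (real q + 1 - \<gamma>)"
  have q3: "real (q+2) + 1 - \<gamma> = real q + 3 - \<gamma>" by simp
  have XY: "(real (q+2) + 1 - \<gamma>) / (fact r * fact (q+2) * (real r + \<gamma>) * real (m+1)) = 1 / X"
     "(real q + 1 - \<gamma>) / (fact r * fact q * (real r + \<gamma>) * real m) = 1 / Y"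
    unfolding X_def Y_def q3 by simp_all
  have "L * Y \<le> X"
  proof -
    have "L * (real q + 3 - \<gamma>) * real m \<le> (real (q+2) * real (q+1) * (real q + 1 - \<gamma>)) * real m"
      using assms(1) by (rule mult_right_mono) simp
    also have "\<dots> \<le> real (q+2) * real (q+1) * (real q + 1 - \<gamma>) * real (m+1)"
      using p by (intro mult_left_mono) auto
    finally have "L * (real q + 3 - \<gamma>) * real m \<le> real (q+2) * real (q+1) * (real q + 1 - \<gamma>) * real (m+1)" .
    then have "(fact r * fact q * (real r + \<gamma>)) * (L * (real q + 3 - \<gamma>) * real m) \<le> (fact r * fact q * (real r + \<gamma>)) * (real (q+2) * real (q+1) * (real q + 1 - \<gamma>) * real (m+1))"
      using p by (intro mult_left_mono) auto
    then have "L * (fact r * fact q * (real r + \<gamma>) * real m) * (real q + 3 - \<gamma>) \<le> fact r * fact (q+2) * (real r + \<gamma>) * real (m+1) * (real q + 1 - \<gamma>)"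
      unfolding fq by (simp add: ac_simps)
    then show ?thesis unfolding X_def Y_def using p assms
      by (simp add: divide_le_eq le_divide_eq)
  qed
  moreover have "X > 0" "Y > 0" unfolding X_def Y_def using p assms by auto
  ultimately show ?thesis unfolding XY by (rule_tac ratio_le) auto
qed

definition cval :: "nat \<Rightarrow> real \<Rightarrow> real" where
  "cval r \<gamma> = (if r mod 4 = 0 \<or> r mod 4 = 3 then 0 else (real r + 1) / (real r + \<gamma>))"

lemma NL1:
  fixes L \<gamma> q :: real
  assumes "0 < \<gamma>" "\<gamma> < 1" "q \<ge> 0" "0 \<le> L" "L \<le> 2 * (1 - \<gamma>) / (3 - \<gamma>)"
  shows "L * (q + 3 - \<gamma>) \<le> (q + 2) * (q + 1) * (q + 1 - \<gamma>)"
proof -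
  have "L * (3 - \<gamma>) \<le> 2 * (1 - \<gamma>)" using assms by (simp add: le_divide_eq)
  then have "L * (3 - \<gamma>) * (q + 3 - \<gamma>) \<le> 2 * (1 - \<gamma>) * (q + 3 - \<gamma>)"
    using assms by (intro mult_right_mono) auto
  also have "\<dots> \<le> 2 * (q + 1 - \<gamma>) * (3 - \<gamma>)" using assms by (simp add: algebra_simps)
  also have "\<dots> \<le> (q + 2) * (q + 1) * (q + 1 - \<gamma>) * (3 - \<gamma>)"
  proof -
    have "2 * 1 \<le> (q + 2) * (q + 1)" using assms by (intro mult_mono) auto
    then show ?thesis using assms by (intro mult_right_mono) auto
  qed
  finally show ?thesis using assms by simp
qed

lemma NL2:
  fixes L \<gamma> q :: real
  assumes "0 < \<gamma>" "\<gamma> < 1" "q \<ge> 1" "0 \<le> L" "L \<le> 6 * (2 - \<gamma>) / (4 - \<gamma>)"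
  shows "L * (q + 3 - \<gamma>) \<le> (q + 2) * (q + 1) * (q + 1 - \<gamma>)"
proof -
  have "L * (4 - \<gamma>) \<le> 6 * (2 - \<gamma>)" using assms by (simp add: le_divide_eq)
  then have "L * (4 - \<gamma>) * (q + 3 - \<gamma>) \<le> 6 * (2 - \<gamma>) * (q + 3 - \<gamma>)"
    using assms by (intro mult_right_mono) auto
  also have "\<dots> \<le> 6 * (q + 1 - \<gamma>) * (4 - \<gamma>)" using assms by (simp add: algebra_simps)
  also have "\<dots> \<le> (q + 2) * (q + 1) * (q + 1 - \<gamma>) * (4 - \<gamma>)"
  proof -
    have "3 * 2 \<le> (q + 2) * (q + 1)" using assms by (intro mult_mono) auto
    then show ?thesis using assms by (intro mult_right_mono) auto
  qed
  finally show ?thesis using assms by simp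
qed

lemma gam_sq:
  fixes \<gamma> :: real
  assumes "0 < \<gamma>" "\<gamma> < 1"
  shows "\<gamma>^2 \<le> \<gamma>" "\<gamma>^2 < 1"
proof -
  have "\<gamma> * \<gamma> \<le> \<gamma> * 1" using assms by (intro mult_left_mono) auto
  then show "\<gamma>^2 \<le> \<gamma>" by (simp add: power2_eq_square)
  then show "\<gamma>^2 < 1" using assms by simp
qed

lemma cfl_sq:
  assumes "0 < \<gamma>" "\<gamma> < 1"
  shows "r mod 4 = 0 \<Longrightarrow> (cfl_bound r \<gamma>)^2 = 6"
    and "r mod 4 = 3 \<Longrightarrow> (cfl_bound r \<gamma>)^2 = 2"
    and "r = 1 \<Longrightarrow> (cfl_bound r \<gamma>)^2 = (1 - \<gamma>^2) / 2"
    and "r mod 4 = 1 \<Longrightarrow> r \<noteq> 1 \<Longrightarrow> (cfl_bound r \<gamma>)^2 = 2 * (1 - \<gamma>) / (3 - \<gamma>)"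
    and "r = 2 \<Longrightarrow> (cfl_bound r \<gamma>)^2 = 2 * (4 - \<gamma>^2) / 3"
    and "r mod 4 = 2 \<Longrightarrow> r \<noteq> 2 \<Longrightarrow> (cfl_bound r \<gamma>)^2 = 6 * (2 - \<gamma>) / (4 - \<gamma>)"
  using assms gam_sq[OF assms] unfolding cfl_bound_def by auto

lemma r4: "r = 4 * (r div 4) + r mod (4::nat)" by simp

lemma m0a: "r mod 4 = (0::nat) \<Longrightarrow> (r+2) div 2 + 2*i \<le> r \<Longrightarrow> even (r+1-((r+2) div 2 + 2*i)) \<and> (r+2) div 2 + 2*i < r \<and> 2*((r+2) div 2 + 2*i) - r - 1 \<ge> 1"
proof -
  assume h: "r mod 4 = 0" "(r+2) div 2 + 2*i \<le> r"
  define k where "k = r div 4"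
  have r: "r = 4*k" using r4[of r] h unfolding k_def by simp
  have m: "(r+2) div 2 + 2*i = 2*k+1+2*i" unfolding r by simp
  have "r + 1 - (2*k+1+2*i) = 2*(k - i)" unfolding r by simp
  then show ?thesis using h(2) unfolding m unfolding r by simp arith
qed

lemma m0b: "r mod 4 = (3::nat) \<Longrightarrow> (r+2) div 2 + 2*i \<le> r \<Longrightarrow> even (r+1-((r+2) div 2 + 2*i)) \<and> (r+2) div 2 + 2*i < r"
proof -
  assume h: "r mod 4 = 3" "(r+2) div 2 + 2*i \<le> r"
  define k where "k = r div 4"
  have r: "r = 4*k+3" using r4[of r] h unfolding k_def by simp
  have m: "(r+2) div 2 + 2*i = 2*k+2+2*i" unfolding r by simp
  have "r + 1 - (2*k+2+2*i) = 2*(k + 1 - i)" unfolding r by simp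
  then show ?thesis using h(2) unfolding m unfolding r by simp arith
qed

lemma m0c: "r mod 4 = (1::nat) \<or> r mod 4 = 2 \<Longrightarrow> (r+2) div 2 + 2*i \<le> r+1 \<Longrightarrow> (r+2) div 2 + 2*i \<le> r \<and> odd (r+1-((r+2) div 2 + 2*i))"
proof -
  assume h: "r mod 4 = 1 \<or> r mod 4 = 2" "(r+2) div 2 + 2*i \<le> r+1"
  define k where "k = r div 4"
  show ?thesis
  proof (cases "r mod 4 = 1")
    case True
    have r: "r = 4*k+1" using r4[of r] True unfolding k_def by simp
    have m: "(r+2) div 2 + 2*i = 2*k+1+2*i" unfolding r by simp
    have i: "i \<le> k" using h(2) unfolding m unfolding r by arith
    have "r + 1 - (2*k+1+2*i) = 2*(k - i) + 1" using i unfolding r by simp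
    then show ?thesis using h(2) i unfolding m unfolding r by simp
  next
    case False
    then have r2: "r mod 4 = 2" using h(1) by simp
    have r: "r = 4*k+2" using r4[of r] r2 unfolding k_def by simp
    have m: "(r+2) div 2 + 2*i = 2*k+2+2*i" unfolding r by simp
    have i: "i \<le> k" using h(2) unfolding m unfolding r by arith
    have "r + 1 - (2*k+2+2*i) = 2*(k - i) + 1" using i unfolding r by simp
    then show ?thesis using h(2) i unfolding m unfolding r by simp
  qed
qed

lemma m0d: "r mod 4 = (2::nat) \<Longrightarrow> 2*((r+2) div 2 + 2*i) - r - 1 \<ge> 1"
proof -
  assume h: "r mod 4 = 2"
  define k where "k = r div 4"
  have r: "r = 4*k+2" using r4[of r] h unfolding k_def by simp
  show ?thesis unfolding r by simp
qed

lemma m0e: "r mod 4 = (0::nat) \<Longrightarrow> 2*((r+2) div 2 + 2*i) - r - 1 \<ge> 1"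
proof -
  assume h: "r mod 4 = 0"
  define k where "k = r div 4"
  have r: "r = 4*k" using r4[of r] h unfolding k_def by simp
  show ?thesis unfolding r by simp
qed

lemma mod4e: "\<not> (r mod 4 = (0::nat) \<or> r mod 4 = 3) \<Longrightarrow> r mod 4 = 1 \<or> r mod 4 = 2"
proof -
  assume h: "\<not> (r mod 4 = (0::nat) \<or> r mod 4 = 3)"
  have "r mod 4 < 4" by simp
  then show ?thesis using h by arith
qed

lemma par_step: "m < (r::nat) \<Longrightarrow> odd (r+1-(m+1)) = even (r+1-m)"
proof -
  assume "m < r"
  then have "r + 1 - m = Suc (r - m)" "r + 1 - (m+1) = r - m" by auto
  then show ?thesis by simp
qed

lemma coef_cond:
  fixes \<gamma> L :: real
  assumes r: "r \<ge> 1" and g: "0 < \<gamma>" "\<gamma> < 1" and L: "0 \<le> L" "L \<le> (cfl_bound r \<gamma>)^2"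
    and i: "2*i < r + 2 - (r+2) div 2"
  shows "ec r (cval r \<gamma>) ((r+2) div 2 + 2*i) \<le> 0 \<and>
     (2*i+1 < r + 2 - (r+2) div 2 \<longrightarrow>
       max (ec r (cval r \<gamma>) ((r+2) div 2 + 2*i + 1)) 0 * L \<le> - ec r (cval r \<gamma>) ((r+2) div 2 + 2*i))"
proof -
  define m where "m = (r+2) div 2 + 2*i"
  have m2: "2*m \<ge> r+1" "m \<le> r+1" using i unfolding m_def by auto
  have i1: "(2*i+1 < r + 2 - (r+2) div 2) = (m \<le> r)" unfolding m_def by auto
  define q where "q = 2*m-r-1"
  have q2: "2*(m+1)-r-1 = q+2" using m2 unfolding q_def by auto
  have gq: "\<gamma>^2 < 1" using gam_sq[OF g] by simp
  show ?thesis unfolding m_def[symmetric] i1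
  proof (cases "r mod 4 = 0 \<or> r mod 4 = 3")
    case True
    then have c: "cval r \<gamma> = 0" unfolding cval_def by simp
    have Lb: "L \<le> real (q+2) * real (q+1)"
    proof (cases "r mod 4 = 0")
      case True
      have "q \<ge> 1" unfolding q_def m_def using m0e[OF True, of i] by simp
      then have "3 * 2 \<le> real (q+2) * real (q+1)" by (intro mult_mono) auto
      then show ?thesis using L cfl_sq(1)[OF g True] by simp
    next
      case False
      then have "r mod 4 = 3" using \<open>r mod 4 = 0 \<or> r mod 4 = 3\<close> by simp
      have "2 * 1 \<le> real (q+2) * real (q+1)" by (intro mult_mono) auto
      then show ?thesis using L cfl_sq(2)[OF g \<open>r mod 4 = 3\<close>] by simp
    qed
    show "ec r (cval r \<gamma>) m \<le> 0 \<and> (m \<le> r \<longrightarrow> max (ec r (cval r \<gamma>) (m + 1)) 0 * L \<le> - ec r (cval r \<gamma>) m)"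
    proof (cases "m \<le> r")
      case False
      then have "m = Suc r" using m2 by simp
      then show ?thesis using False unfolding c ec_def by simp
    next
      case True
      have par: "even (r+1-m)" "m < r"
        using m0a[of r i] m0b[of r i] True \<open>r mod 4 = 0 \<or> r mod 4 = 3\<close> unfolding m_def by auto
      have e0: "ec r 0 m = - (1 / (fact r * fact q * real m))"
        unfolding q_def using ec_zero[OF True m2(1)] par by simp
      have "odd (r+1-(m+1))" using par par_step[of m r] by simp
      then have e1: "ec r 0 (m+1) = 1 / (fact r * fact (q+2) * real (m+1))"
        using ec_zero[of "m+1" r] par m2 q2 by simp
      have "L * (1 / (fact r * fact (q+2) * real (m+1))) \<le> 1 / (fact r * fact q * real m)"
        by (rule R0) (use Lb m2 L in auto)
      moreover have "1 / (fact r * fact q * real m) \<ge> 0" by simp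
      moreover have "1 / (fact r * fact (q+2) * real (m+1)) \<ge> 0" by simp
      ultimately show ?thesis unfolding c e0 e1 by (simp add: max_def)
    qed
  next
    case False
    then have c: "cval r \<gamma> = (real r + 1) / (real r + \<gamma>)" unfolding cval_def by simp
    have par: "m \<le> r" "odd (r+1-m)" using m0c[OF mod4e[OF False], of i] m2 unfolding m_def by auto
    have G0: "(real q + 1 - \<gamma>) / (fact r * fact q * (real r + \<gamma>) * real m) > 0"
      using g m2 by (intro divide_pos_pos mult_pos_pos) auto
    have e0: "ec r (cval r \<gamma>) m = - ((real q + 1 - \<gamma>) / (fact r * fact q * (real r + \<gamma>) * real m))"
      unfolding c q_def using ec_gam[OF par(1) m2(1) g(1)] par(2) by (simp add: minus_divide_left)
    have "max (ec r (cval r \<gamma>) (m + 1)) 0 * L \<le> - ec r (cval r \<gamma>) m"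
    proof (cases "m < r")
      case True
      have "even (r+1-(m+1))" using par par_step[of m r] True by simp
      then have e1: "ec r (cval r \<gamma>) (m+1) = (real (q+2) + 1 - \<gamma>) / (fact r * fact (q+2) * (real r + \<gamma>) * real (m+1))"
        unfolding c using ec_gam[of "m+1" r \<gamma>] True m2 q2 g by simp
      have Lq: "L * (real q + 3 - \<gamma>) \<le> real (q+2) * real (q+1) * (real q + 1 - \<gamma>)"
      proof (cases "r mod 4 = 1")
        case True
        have "r \<noteq> 1" using \<open>m < r\<close> m2 by auto
        then have "(cfl_bound r \<gamma>)^2 = 2 * (1 - \<gamma>) / (3 - \<gamma>)" using cfl_sq(4)[OF g True] by simp
        then show ?thesis using NL1[OF g, of "real q" L] L by (simp add: algebra_simps)
      next
        case False
        then have r2: "r mod 4 = 2" using mod4e[OF \<open>\<not> (r mod 4 = 0 \<or> r mod 4 = 3)\<close>] by simp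
        have "r \<noteq> 2" using \<open>m < r\<close> m2 by auto
        then have "(cfl_bound r \<gamma>)^2 = 6 * (2 - \<gamma>) / (4 - \<gamma>)" using cfl_sq(6)[OF g r2] by simp
        moreover have "q \<ge> 1" unfolding q_def m_def using m0d[OF r2, of i] by simp
        ultimately show ?thesis using NL2[OF g, of "real q" L] L by (simp add: algebra_simps)
      qed
      have le: "L * ((real (q+2) + 1 - \<gamma>) / (fact r * fact (q+2) * (real r + \<gamma>) * real (m+1)))
          \<le> (real q + 1 - \<gamma>) / (fact r * fact q * (real r + \<gamma>) * real m)"
        by (rule RG[OF Lq _ L(1) g]) (use m2 in auto)
      have nn: "(real (q+2) + 1 - \<gamma>) / (fact r * fact (q+2) * (real r + \<gamma>) * real (m+1)) \<ge> 0"
        using g by (intro divide_nonneg_pos mult_pos_pos) auto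
      show ?thesis unfolding e0 e1 max_absorb1[OF nn] using le by (simp only: mult.commute minus_minus)
    next
      case False
      then have mr: "m = r" using par by simp
      have e1: "ec r (cval r \<gamma>) (m+1) = 1 / ((real r + \<gamma>)^2 * (fact r)^2)"
        unfolding c mr using ec_last[OF g(1)] by simp
      have qq: "q = r - 1" unfolding q_def mr by simp
      have fr: "fact r = real r * fact (r - 1)" using fact_reduce[of r] r by simp
      have qr: "real q + 1 - \<gamma> = real r - \<gamma>" "fact q * real m = fact r"
        using r unfolding qq mr fr by (simp_all add: of_nat_diff)
      have Lr: "L \<le> (real r - \<gamma>) * (real r + \<gamma>)"
      proof -
        have sq: "(real r - \<gamma>) * (real r + \<gamma>) = real r * real r - \<gamma>^2" by (simp add: algebra_simps power2_eq_square)
        consider "r = 1" | "r = 2" | "r \<ge> 3" using r by linarith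
        then show ?thesis
        proof cases
          case 1 then show ?thesis using L cfl_sq(3)[OF g] gq unfolding sq by simp
        next
          case 2 then show ?thesis using L cfl_sq(5)[OF g] gq unfolding sq by simp
        next
          case 3
          have "L \<le> 6"
          proof (cases "r mod 4 = 1")
            case True
            then have "L \<le> 2 * (1 - \<gamma>) / (3 - \<gamma>)" using L cfl_sq(4)[OF g True] 3 by simp
            also have "\<dots> \<le> 6" using g by (simp add: divide_le_eq)
            finally show ?thesis .
          next
            case False
            then have r2: "r mod 4 = 2" using mod4e[OF \<open>\<not> (r mod 4 = 0 \<or> r mod 4 = 3)\<close>] by simp
            have "L \<le> 6 * (2 - \<gamma>) / (4 - \<gamma>)" using L cfl_sq(6)[OF g r2] 3 by simp
            also have "\<dots> \<le> 6" using g by (simp add: divide_le_eq)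
            finally show ?thesis .
          qed
          moreover have "real r * real r \<ge> 3 * 3" using 3 by (intro mult_mono) auto
          ultimately show ?thesis unfolding sq using gq by simp
        qed
      qed
      define X where "X = (real r + \<gamma>)^2 * (fact r)^2"
      define Y where "Y = (real r + \<gamma>) * (fact r)^2 / (real r - \<gamma>)"
      have rg: "real r - \<gamma> > 0" "real r + \<gamma> > 0" using r g by auto
      have XY: "(real q + 1 - \<gamma>) / (fact r * fact q * (real r + \<gamma>) * real m) = 1 / Y"
        unfolding Y_def qr(1) using qr(2) by (simp add: power2_eq_square mult_ac)
      have "L * (1 / X) \<le> 1 / Y"
      proof (rule ratio_le)
        show "X > 0" "Y > 0" unfolding X_def Y_def using rg by auto
        have "L * ((real r + \<gamma>) * (fact r)^2) \<le> ((real r - \<gamma>) * (real r + \<gamma>)) * ((real r + \<gamma>) * (fact r)^2)"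
          using Lr rg by (intro mult_right_mono) auto
        then show "L * Y \<le> X" unfolding X_def Y_def using rg
          by (simp add: divide_le_eq le_divide_eq power2_eq_square mult_ac)
      qed
      moreover have nn: "1 / X \<ge> 0" unfolding X_def by simp
      ultimately show ?thesis unfolding e0 e1 XY X_def[symmetric] max_absorb1[OF nn] by (simp only: mult.commute minus_minus)
    qed
    then show "ec r (cval r \<gamma>) m \<le> 0 \<and> (m \<le> r \<longrightarrow> max (ec r (cval r \<gamma>) (m + 1)) 0 * L \<le> - ec r (cval r \<gamma>) m)"
      using e0 G0 by simp
  qed
qed

fun ccoef :: "nat \<Rightarrow> real \<Rightarrow> nat \<Rightarrow> real" where
  "ccoef r \<gamma> 0 = 1 / \<gamma>"
| "ccoef r \<gamma> (Suc m) = gam_coef r \<gamma> (Suc m) * ccoef r \<gamma> m"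

lemma cancel4:
  fixes a b c d :: real
  assumes "b \<noteq> 0" "c \<noteq> 0"
  shows "a * b / (c * d) * (c / b) = a / d"
  using assms by (simp add: field_simps)

lemma ccoef_r:
  assumes "r \<ge> 1" "0 < \<gamma>"
  shows "ccoef r \<gamma> r = cval r \<gamma>"
proof (cases "r mod 4 = 0 \<or> r mod 4 = 3")
  case True
  obtain r' where "r = Suc r'" using assms by (cases r) auto
  then show ?thesis using True by (simp add: gam_coef_def cval_def)
next
  case False
  have "ccoef r \<gamma> m = (real m + 1) / (real m + \<gamma>)" for m
  proof (induction m)
    case 0 then show ?case by simp
  next
    case (Suc m)
    have p: "real m + \<gamma> > 0" "real m + 1 + \<gamma> > 0" using assms by auto
    have "ccoef r \<gamma> (Suc m) = ((real m + 2) * (real m + \<gamma>) / ((real m + 1) * (real m + 1 + \<gamma>))) * ((real m + 1) / (real m + \<gamma>))"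
      using Suc False by (simp add: gam_coef_def add_ac)
    also have "\<dots> = (real m + 2) / (real m + 1 + \<gamma>)"
      by (rule cancel4) (use p in auto)
    also have "\<dots> = (real (Suc m) + 1) / (real (Suc m) + \<gamma>)" by (simp add: add_ac)
    finally show ?case .
  qed
  then show ?thesis using False by (simp add: cval_def)
qed

lemma mix_EE:
  "g *\<^sub>R EE D y m c x + (1 - g) *\<^sub>R TT D y m x = EE D y m (g * c) x"
  unfolding EE_def by (simp add: algebra_simps scaleR_diff_left)

lemma interval_bound:
  fixes D :: "real^'n^'n" and y :: "real^'n" and Yf Ytf :: "nat \<Rightarrow> real \<Rightarrow> real^'n"
  assumes sk: "D + transpose D = 0" and r: "r \<ge> 1" and g: "0 < \<gamma>" "\<gamma> < 1"
    and ab: "a \<le> b" and cfl: "(b - a) * onorm (\<lambda>x. D *v x) \<le> cfl_bound r \<gamma>"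
    and Y0: "\<forall>s\<in>{a..b}. Yf 0 s = y"
    and Yt0: "Ytf 0 a = y \<and> (\<forall>s\<in>{a..b}. (Ytf 0 has_vector_derivative ((1 / \<gamma>) *\<^sub>R (D *v y))) (at s within {a..b}))"
    and Ym: "\<forall>m. 1 \<le> m \<and> m \<le> r \<longrightarrow> Yf m a = y \<and>
        (\<forall>s\<in>{a..b}. (Yf m has_vector_derivative (D *v Yf (m - 1) s)) (at s within {a..b}))"
    and Ytm: "\<forall>m. 1 \<le> m \<and> m \<le> r \<longrightarrow> Ytf m a = y \<and>
        (\<forall>s\<in>{a..b}. (Ytf m has_vector_derivative
              (D *v (gam_coef r \<gamma> m *\<^sub>R Ytf (m - 1) s + (1 - gam_coef r \<gamma> m) *\<^sub>R Yf (m - 1) s)))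
             (at s within {a..b}))"
  shows "\<forall>s\<in>{a..b}. norm (Ytf r s) \<le> norm y"
proof -
  have Yc: "m \<le> r \<Longrightarrow> \<forall>s\<in>{a..b}. Yf m s = TT D y m (s - a)" for m
  proof (induction m)
    case 0 then show ?case using Y0 by (simp add: TT_def)
  next
    case (Suc m)
    have IH: "\<forall>s\<in>{a..b}. Yf m s = TT D y m (s - a)" using Suc by simp
    have h: "1 \<le> Suc m \<and> Suc m \<le> r" using Suc by simp
    show ?case
    proof (rule ode_unique[OF _ _ _ ab])
      show "\<forall>s\<in>{a..b}. (Yf (Suc m) has_vector_derivative D *v TT D y m (s - a)) (at s within {a..b})"
        using Ym[rule_format, OF h] IH by simp
      show "\<forall>s\<in>{a..b}. ((\<lambda>s. TT D y (Suc m) (s - a)) has_vector_derivative D *v TT D y m (s - a)) (at s within {a..b})"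
        using TT_deriv by blast
      show "Yf (Suc m) a = TT D y (Suc m) (a - a)" using Ym[rule_format, OF h] by simp
    qed
  qed
  have Ytc: "m \<le> r \<Longrightarrow> \<forall>s\<in>{a..b}. Ytf m s = EE D y m (ccoef r \<gamma> m) (s - a)" for m
  proof (induction m)
    case 0
    show ?case
    proof (rule ode_unique[OF _ _ _ ab])
      show "\<forall>s\<in>{a..b}. (Ytf 0 has_vector_derivative (1 / \<gamma>) *\<^sub>R (D *v y)) (at s within {a..b})"
        using Yt0 by simp
      show "\<forall>s\<in>{a..b}. ((\<lambda>s. EE D y 0 (ccoef r \<gamma> 0) (s - a)) has_vector_derivative (1 / \<gamma>) *\<^sub>R (D *v y)) (at s within {a..b})"
        using EE0_deriv[of D y "1/\<gamma>" a] by simp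
      show "Ytf 0 a = EE D y 0 (ccoef r \<gamma> 0) (a - a)" using Yt0 by simp
    qed
  next
    case (Suc m)
    have IH: "\<forall>s\<in>{a..b}. Ytf m s = EE D y m (ccoef r \<gamma> m) (s - a)" using Suc by simp
    have IY: "\<forall>s\<in>{a..b}. Yf m s = TT D y m (s - a)" using Yc Suc by simp
    have h: "1 \<le> Suc m \<and> Suc m \<le> r" using Suc by simp
    show ?case
    proof (rule ode_unique[OF _ _ _ ab])
      show "\<forall>s\<in>{a..b}. (Ytf (Suc m) has_vector_derivative D *v EE D y m (ccoef r \<gamma> (Suc m)) (s - a)) (at s within {a..b})"
        using Ytm[rule_format, OF h] IH IY by (simp add: mix_EE)
      show "\<forall>s\<in>{a..b}. ((\<lambda>s. EE D y (Suc m) (ccoef r \<gamma> (Suc m)) (s - a)) has_vector_derivative D *v EE D y m (ccoef r \<gamma> (Suc m)) (s - a)) (at s within {a..b})"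
        using EE_deriv by blast
      show "Ytf (Suc m) a = EE D y (Suc m) (ccoef r \<gamma> (Suc m)) (a - a)" using Ytm[rule_format, OF h] by simp
    qed
  qed
  show ?thesis
  proof
    fix s assume s: "s \<in> {a..b}"
    define x where "x = s - a"
    have x: "0 \<le> x" "x \<le> b - a" using s unfolding x_def by auto
    have eq: "Ytf r s = EE D y r (cval r \<gamma>) x"
      using Ytc[of r] s ccoef_r[OF r g(1)] unfolding x_def by simp
    define onD where "onD = onorm (\<lambda>x. D *v x)"
    have onD0: "onD \<ge> 0" unfolding onD_def by (rule onorm_pos_le) simp
    have Dle: "norm (D *v v) \<le> onD * norm v" for v
      unfolding onD_def by (rule onorm) simp
    define L where "L = (x * onD)^2"
    have L0: "L \<ge> 0" unfolding L_def by simp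
    have "x * onD \<le> cfl_bound r \<gamma>"
      using cfl x onD0 unfolding onD_def[symmetric] by (meson mult_right_mono order_trans)
    then have Lc: "L \<le> (cfl_bound r \<gamma>)^2" unfolding L_def using x onD0 by (intro power_mono) auto
    define A where "A m = x^(2*m) * aa D y m" for m
    have A0: "\<forall>m. A m \<ge> 0" unfolding A_def using x by simp
    have AL: "\<forall>m. A (Suc m) \<le> L * A m"
    proof
      fix m
      have "norm (pw D y (Suc m)) \<le> onD * norm (pw D y m)" using Dle by simp
      then have "(norm (pw D y (Suc m)))^2 \<le> (onD * norm (pw D y m))^2" by (intro power_mono) auto
      then have "aa D y (Suc m) \<le> onD^2 * aa D y m" by (simp add: power2_norm_eq_inner power_mult_distrib)
      then have "x^(2*m) * x^2 * aa D y (Suc m) \<le> x^(2*m) * x^2 * (onD^2 * aa D y m)"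
        using x by (intro mult_left_mono) auto
      then show "A (Suc m) \<le> L * A m" unfolding A_def L_def
        by (simp add: power_mult_distrib power_add mult_ac power2_eq_square)
    qed
    have M: "{(r+2) div 2..<(r+2) div 2 + (r + 2 - (r+2) div 2)} = {(r+2) div 2..<r+2}" by auto
    have "(\<Sum>m\<in>{(r+2) div 2..<(r+2) div 2 + (r + 2 - (r+2) div 2)}. ec r (cval r \<gamma>) m * A m) \<le> 0"
      by (rule alt_sum[OF L0 A0 AL]) (use coef_cond[OF r g L0 Lc] in blast)
    then have "(\<Sum>m\<in>{(r+2) div 2..<r+2}. ec r (cval r \<gamma>) m * (x^(2*m) * aa D y m)) \<le> 0"
      unfolding M A_def by simp
    then have "Ytf r s \<bullet> Ytf r s \<le> y \<bullet> y"
      unfolding eq norm_EE[OF sk x(1) r] by simp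
    then show "norm (Ytf r s) \<le> norm y" by (simp add: norm_le)
  qed
qed

theorem theorem3p1:
  fixes D :: "real ^ 'M ^ 'M"
    and r :: nat and \<gamma> :: real and Y0 :: "real ^ 'M"
    and N :: nat and t :: "nat \<Rightarrow> real" and T :: real
    and Y :: "nat \<Rightarrow> nat \<Rightarrow> real \<Rightarrow> real ^ 'M"
    and Yt :: "nat \<Rightarrow> nat \<Rightarrow> real \<Rightarrow> real ^ 'M"
    and Yr :: "real \<Rightarrow> real ^ 'M"
  assumes skew: "D + transpose D = 0"
    and r: "r \<ge> 1"
    and gam: "0 < \<gamma>" "\<gamma> < 1"
    and N: "N \<ge> 1"
    and t0: "t 0 = 0" and tN: "t N = T"
    and tmono: "\<forall>n<N. t n < t (Suc n)"
    and CFL: "Max {t (Suc n) - t n | n. n < N} * onorm (\<lambda>x. D *v x) \<le> cfl_bound r \<gamma>"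
    and init: "Yr 0 = Y0"
    and step0: "\<forall>n<N. \<forall>s\<in>{t n..t (Suc n)}. Y n 0 s = Yr (t n)"
    and stept0: "\<forall>n<N. Yt n 0 (t n) = Yr (t n) \<and>
        (\<forall>s\<in>{t n..t (Suc n)}.
           (Yt n 0 has_vector_derivative ((1 / \<gamma>) *\<^sub>R (D *v Yr (t n)))) (at s within {t n..t (Suc n)}))"
    and stepY: "\<forall>n<N. \<forall>m. 1 \<le> m \<and> m \<le> r \<longrightarrow> Y n m (t n) = Yr (t n) \<and>
        (\<forall>s\<in>{t n..t (Suc n)}.
           (Y n m has_vector_derivative (D *v Y n (m - 1) s)) (at s within {t n..t (Suc n)}))"
    and stepYt: "\<forall>n<N. \<forall>m. 1 \<le> m \<and> m \<le> r \<longrightarrow> Yt n m (t n) = Yr (t n) \<and>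
        (\<forall>s\<in>{t n..t (Suc n)}.
           (Yt n m has_vector_derivative
              (D *v (gam_coef r \<gamma> m *\<^sub>R Yt n (m - 1) s + (1 - gam_coef r \<gamma> m) *\<^sub>R Y n (m - 1) s)))
             (at s within {t n..t (Suc n)}))"
    and out: "\<forall>n<N. \<forall>s\<in>{t n..t (Suc n)}. Yr s = Yt n r s"
  shows "\<forall>s\<in>{0..T}. norm (Yr s) \<le> norm Y0"
proof -
  have stepb: "\<forall>s\<in>{t n..t (Suc n)}. norm (Yr s) \<le> norm (Yr (t n))" if n: "n < N" for n
  proof -
    have fin: "{t (Suc n) - t n | n. n < N} = (\<lambda>n. t (Suc n) - t n) ` {..<N}" by auto
    have "t (Suc n) - t n \<le> Max {t (Suc n) - t n | n. n < N}"
      unfolding fin by (rule Max_ge) (use n in auto)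
    moreover have "onorm (\<lambda>x. D *v x) \<ge> 0" by (rule onorm_pos_le) simp
    ultimately have "(t (Suc n) - t n) * onorm (\<lambda>x. D *v x) \<le> Max {t (Suc n) - t n | n. n < N} * onorm (\<lambda>x. D *v x)"
      by (rule mult_right_mono)
    then have cfl: "(t (Suc n) - t n) * onorm (\<lambda>x. D *v x) \<le> cfl_bound r \<gamma>" using CFL by linarith
    have ab: "t n \<le> t (Suc n)" using tmono n by auto
    have p0: "\<forall>s\<in>{t n..t (Suc n)}. Y n 0 s = Yr (t n)" using step0 n by blast
    have p1: "Yt n 0 (t n) = Yr (t n) \<and>
        (\<forall>s\<in>{t n..t (Suc n)}.
           (Yt n 0 has_vector_derivative ((1 / \<gamma>) *\<^sub>R (D *v Yr (t n)))) (at s within {t n..t (Suc n)}))"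
      using stept0 n by blast
    have p2: "\<forall>m. 1 \<le> m \<and> m \<le> r \<longrightarrow> Y n m (t n) = Yr (t n) \<and>
        (\<forall>s\<in>{t n..t (Suc n)}.
           (Y n m has_vector_derivative (D *v Y n (m - 1) s)) (at s within {t n..t (Suc n)}))"
      using stepY n by blast
    have p3: "\<forall>m. 1 \<le> m \<and> m \<le> r \<longrightarrow> Yt n m (t n) = Yr (t n) \<and>
        (\<forall>s\<in>{t n..t (Suc n)}.
           (Yt n m has_vector_derivative
              (D *v (gam_coef r \<gamma> m *\<^sub>R Yt n (m - 1) s + (1 - gam_coef r \<gamma> m) *\<^sub>R Y n (m - 1) s)))
             (at s within {t n..t (Suc n)}))"
      using stepYt n by blast
    have "\<forall>s\<in>{t n..t (Suc n)}. norm (Yt n r s) \<le> norm (Yr (t n))"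
      by (rule interval_bound[OF skew r gam ab cfl p0 p1 p2 p3])
    then show ?thesis using out n by auto
  qed
  have "n \<le> N \<Longrightarrow> \<forall>s\<in>{t 0..t n}. norm (Yr s) \<le> norm Y0" for n
  proof (induction n)
    case 0 then show ?case using init t0 by auto
  next
    case (Suc n)
    show ?case
    proof
      fix s assume s: "s \<in> {t 0..t (Suc n)}"
      show "norm (Yr s) \<le> norm Y0"
      proof (cases "s \<le> t n")
        case True then show ?thesis using Suc s by auto
      next
        case False
        then have "s \<in> {t n..t (Suc n)}" using s by auto
        then have "norm (Yr s) \<le> norm (Yr (t n))" using stepb[of n] Suc by auto
        moreover have "t 0 \<le> t n"
        proof -
          have "\<forall>j\<le>n. t 0 \<le> t j"
          proof (intro allI impI)
            fix j assume "j \<le> n"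
            then show "t 0 \<le> t j"
            proof (induction j)
              case 0 then show ?case by simp
            next
              case (Suc j)
              then have "t j < t (Suc j)" using tmono Suc.prems \<open>Suc n \<le> N\<close> by auto
              then show ?case using Suc by auto
            qed
          qed
          then show ?thesis by simp
        qed
        then have "norm (Yr (t n)) \<le> norm Y0" using Suc by auto
        ultimately show ?thesis by simp
      qed
    qed
  qed
  then show ?thesis using t0 tN by auto
qed

end
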